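(* For all real numbers $a,b,c>0$, \[ \frac{a^{2}b}{(a+b)^{3}} + \frac{ac^{2}}{(a+c)^{3}} + \frac{b^{2}c}{(b+c)^{3}} \leq \frac{3}{8}. \] *)

theory Defs
  imports Complex_Main
begin

end

theory Submission
  imports Defs
begin

lemma key1:
  fixes u v :: real assumes "u > 0" "v > 0"
  shows "u^2 * v / (u + v)^3 \<le> 3/16 * (1 - v^2 / (u^2 + u*v + v^2))"
proof -
  have p: "(u+v)^3 > 0" "u^2+u*v+v^2 > 0" using assms by (auto simp: add_pos_pos)
  have "16 * u * v * (u^2+u*v+v^2) \<le> 3 * (u+v)^4"
  proof -
    have "3 * (u+v)^4 - 16 * u * v * (u^2+u*v+v^2) = (u-v)^2 * (3*u^2+2*u*v+3*v^2)"
      by (simp add: algebra_simps power2_eq_square power4_eq_xxxx power3_eq_cube)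
    also have "\<dots> \<ge> 0" using assms by (intro mult_nonneg_nonneg) (auto simp: add_pos_pos)
    finally show ?thesis by simp
  qed
  have e: "1 - v^2 / (u^2 + u*v + v^2) = u*(u+v) / (u^2+u*v+v^2)"
    using p by (simp add: field_simps power2_eq_square)
  have "u^2 * v / (u + v)^3 \<le> 3/16 * (u*(u+v) / (u^2+u*v+v^2))"
    using p \<open>16 * u * v * (u^2+u*v+v^2) \<le> 3 * (u+v)^4\<close> assms
    by (simp add: divide_simps power4_eq_xxxx power3_eq_cube power2_eq_square) (simp add: algebra_simps)
  with e show ?thesis by simp
qed

lemma ident:
  fixes a b c :: real
  shows "b^2*(a^2+a*c+c^2)*(b^2+b*c+c^2) + a^2*(a^2+a*b+b^2)*(b^2+b*c+c^2)
    + c^2*(a^2+a*b+b^2)*(a^2+a*c+c^2) - (a^2+a*b+b^2)*(a^2+a*c+c^2)*(b^2+b*c+c^2)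
   = ((b*c^2 - a*b^2)^2 + (a*b^2 - a^2*c)^2 + (a^2*c - b*c^2)^2) / 2"
  by (simp add: algebra_simps power2_eq_square)

lemma key2:
  fixes a b c :: real assumes "a > 0" "b > 0" "c > 0"
  shows "b^2/(a^2+a*b+b^2) + a^2/(c^2+c*a+a^2) + c^2/(b^2+b*c+c^2) \<ge> 1"
proof -
  define D1 where "D1 = a^2+a*b+b^2"
  define D2 where "D2 = a^2+a*c+c^2"
  define D3 where "D3 = b^2+b*c+c^2"
  have p: "D1 > 0" "D2 > 0" "D3 > 0" using assms unfolding D1_def D2_def D3_def
    by (auto simp: add_pos_pos)
  have "b^2*D2*D3 + a^2*D1*D3 + c^2*D1*D2 - D1*D2*D3 \<ge> 0"
    unfolding D1_def D2_def D3_def ident by simp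
  then have "b^2*D2*D3 + a^2*D1*D3 + c^2*D1*D2 \<ge> D1*D2*D3" by simp
  moreover have "c^2+c*a+a^2 = D2" unfolding D2_def by (simp add: algebra_simps)
  ultimately show ?thesis using p unfolding D1_def[symmetric] D3_def[symmetric]
    by (simp add: field_simps)
qed

theorem mainTheorem9:
  fixes a b c :: real
  assumes "a > 0" and "b > 0" and "c > 0"
  shows "a^2 * b / (a + b)^3 + a * c^2 / (a + c)^3 + b^2 * c / (b + c)^3 \<le> 3 / 8"
proof -
  have 1: "a^2 * b / (a + b)^3 \<le> 3/16 * (1 - b^2 / (a^2 + a*b + b^2))"
    using key1[of a b] assms by simp
  have 2: "a * c^2 / (a + c)^3 \<le> 3/16 * (1 - a^2 / (c^2 + c*a + a^2))"
    using key1[of c a] assms by (simp add: add.commute mult.commute)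
  have 3: "b^2 * c / (b + c)^3 \<le> 3/16 * (1 - c^2 / (b^2 + b*c + c^2))"
    using key1[of b c] assms by simp
  show ?thesis using 1 2 3 key2[OF assms] unfolding right_diff_distrib by linarith
qed

end
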